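(* Let $\mathcal{D}$ be a probability distribution over triples $(x,y,z)$, and let $S=\{(x_1,y_1,z_1),\dots,(x_N,y_N,z_N)\}$ be a finite sample. For parameters $u\in\mathcal{U}$, $v\in\mathcal{V}$, $w\in\mathcal{W}$ and $\rho>0$, define the joint loss $$l_J(x,y,z;u,v,w) = -l_p(h_p(g(x;u);v),y) + \rho\, l_u(h_u(g(x;u);w),z).$$ Let $(u^\ast,v^\ast,w^\ast)$ be a solution of the expected-risk problem, i.e. $v^\ast=v^\ast(u^\ast)$, $w^\ast=w^\ast(u^\ast)$ and $u^\ast$ minimizes $u\mapsto E_{\mathcal{D}}[l_J(u,v^\ast(u),w^\ast(u))]$, where $v^\ast(u)\in\arg\max_v E_{\mathcal{D}}[-l_p(u,v)]$ and $w^\ast(u)\in\arg\min_w E_{\mathcal{D}}[l_u(u,w)]$; equivalently $$E_{\mathcal{D}}[l_J(u^\ast,v^\ast,w^\ast)] = \min_u\Big[\max_v E_{\mathcal{D}}[-l_p(u,v)] + \rho\min_w E_{\mathcal{D}}[l_u(u,w)]\Big].$$ Let $(\hat u,\hat v,\hat w)$ be the analogous solution of the empirical problem, with $E_{\mathcal{D}}$ replaced by the empirical mean $E_S$ (so $\hat v=\hat v(\hat u)$, $\hat w=\hat w(\hat u)$ with $\hat v(u)\in\arg\max_v E_S[-l_p(u,v)]$, $\hat w(u)\in\arg\min_w E_S[l_u(u,w)]$, and $\hat u$ minimizes $u\mapsto E_S[l_J(u,\hat v(u),\hat w(u))]$). Then $$\big| E_{\mathcal{D}}[l_J(\hat u,\hat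 v,\hat w)] - E_{\mathcal{D}}[l_J(u^\ast,v^\ast,w^\ast)]\big| \le 2\sup_{u,v,w}\big| E_{\mathcal{D}}[l_J(u,v,w)] - E_S[l_J(u,v,w)]\big|.$$
   Context: Setting: $\mathcal{X}\subset\mathbb{R}^D$ is a feature space; $y$ is a private variable and $z$ a target variable. A filter $g(\cdot;u):\mathcal{X}\to\mathbb{R}^d$ is parameterized by $u\in\mathcal{U}$; predictors $h_p(\cdot;v)$ ($v\in\mathcal{V}$) and $h_u(\cdot;w)$ ($w\in\mathcal{W}$) act on filter outputs; $l_p,l_u$ are real-valued loss functions. The sets $\mathcal{U},\mathcal{V},\mathcal{W}$ are compact convex subsets of Euclidean spaces, and $g,h_p,h_u,l_p,l_u$ are continuous, so that all minima/maxima are attained. Notation: $l_p(u,v)$ stands for the random quantity $l_p(h_p(g(x;u);v),y)$, $l_u(u,w)$ for $l_u(h_u(g(x;u);w),z)$, and $l_J(u,v,w)$ for $l_J(x,y,z;u,v,w)$. $E_{\mathcal{D}}[\cdot]$ denotes expectation with $(x,y,z)\sim\mathcal{D}$, and $E_S[f]=\frac1N\sum_{(x,y,z)\in S} f(x,y,z)$ the empirical mean over $S$. *)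

theory Defs
  imports "HOL-Probability.Probability"
begin

definition lossP ::
  "('p \<Rightarrow> 'y \<Rightarrow> real) \<Rightarrow> ('f \<Rightarrow> 'v \<Rightarrow> 'p) \<Rightarrow> ('x \<Rightarrow> 'u \<Rightarrow> 'f)
   \<Rightarrow> 'u \<Rightarrow> 'v \<Rightarrow> 'x \<times> 'y \<times> 'z \<Rightarrow> real" where
  "lossP lp hp g u v t = lp (hp (g (fst t) u) v) (fst (snd t))"

definition lossU ::
  "('q \<Rightarrow> 'z \<Rightarrow> real) \<Rightarrow> ('f \<Rightarrow> 'w \<Rightarrow> 'q) \<Rightarrow> ('x \<Rightarrow> 'u \<Rightarrow> 'f)
   \<Rightarrow> 'u \<Rightarrow> 'w \<Rightarrow> 'x \<times> 'y \<times> 'z \<Rightarrow> real" where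
  "lossU lu hu g u w t = lu (hu (g (fst t) u) w) (snd (snd t))"

definition lossJ ::
  "('p \<Rightarrow> 'y \<Rightarrow> real) \<Rightarrow> ('q \<Rightarrow> 'z \<Rightarrow> real) \<Rightarrow> ('f \<Rightarrow> 'v \<Rightarrow> 'p) \<Rightarrow> ('f \<Rightarrow> 'w \<Rightarrow> 'q)
   \<Rightarrow> ('x \<Rightarrow> 'u \<Rightarrow> 'f) \<Rightarrow> real \<Rightarrow> 'u \<Rightarrow> 'v \<Rightarrow> 'w \<Rightarrow> 'x \<times> 'y \<times> 'z \<Rightarrow> real" where
  "lossJ lp lu hp hu g \<rho> u v w t = - lossP lp hp g u v t + \<rho> * lossU lu hu g u w t"

definition ED :: "'a measure \<Rightarrow> ('a \<Rightarrow> real) \<Rightarrow> real" where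
  "ED D f = (\<integral>t. f t \<partial>D)"

definition ES :: "'a list \<Rightarrow> ('a \<Rightarrow> real) \<Rightarrow> real" where
  "ES S f = (\<Sum>t\<leftarrow>S. f t) / real (length S)"

text \<open>(u,v,w) solves the nested min-max problem for the averaging functional E
  (E = ED D for the expected-risk problem, E = ES S for the empirical one):
  v = vs(u), w = ws(u) where vs(u') is an argmax of v' |-> E[-l_p(u',v')],
  ws(u') is an argmin of w' |-> E[l_u(u',w')], and u minimises
  u' |-> E[l_J(u', vs u', ws u')].\<close>
definition is_solution ::
  "(('x \<times> 'y \<times> 'z \<Rightarrow> real) \<Rightarrow> real)
   \<Rightarrow> ('p \<Rightarrow> 'y \<Rightarrow> real) \<Rightarrow> ('q \<Rightarrow> 'z \<Rightarrow> real) \<Rightarrow> ('f \<Rightarrow> 'v \<Rightarrow> 'p) \<Rightarrow> ('f \<Rightarrow> 'w \<Rightarrow> 'q)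
   \<Rightarrow> ('x \<Rightarrow> 'u \<Rightarrow> 'f) \<Rightarrow> real \<Rightarrow> 'u set \<Rightarrow> 'v set \<Rightarrow> 'w set
   \<Rightarrow> 'u \<Rightarrow> 'v \<Rightarrow> 'w \<Rightarrow> bool" where
  "is_solution E lp lu hp hu g \<rho> U V W u v w \<longleftrightarrow>
     u \<in> U \<and>
     (\<exists>vs ws.
        (\<forall>u'\<in>U. vs u' \<in> V \<and>
                  (\<forall>v'\<in>V. E (\<lambda>t. - lossP lp hp g u' v' t) \<le> E (\<lambda>t. - lossP lp hp g u' (vs u') t))) \<and>
        (\<forall>u'\<in>U. ws u' \<in> W \<and>
                  (\<forall>w'\<in>W. E (lossU lu hu g u' (ws u')) \<le> E (lossU lu hu g u' w'))) \<and>
        v = vs u \<and> w = ws u \<and>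
        (\<forall>u'\<in>U. E (lossJ lp lu hp hu g \<rho> u v w) \<le> E (lossJ lp lu hp hu g \<rho> u' (vs u') (ws u'))))"

end

theory Submission
  imports Defs
begin

lemma ES_lin: "ES S (lossJ lp lu hp hu g \<rho> u v w) = ES S (\<lambda>t. - lossP lp hp g u v t) + \<rho> * ES S (lossU lu hu g u w)"
proof -
  have A: "(\<Sum>t\<leftarrow>S. - a t + c * b t) = - (\<Sum>t\<leftarrow>S. a t) + c * (\<Sum>t\<leftarrow>S. b t)" for a b :: "_ \<Rightarrow> real" and c
    by (induction S) (auto simp: algebra_simps)
  have B: "(\<Sum>t\<leftarrow>S. - a t) = - (\<Sum>t\<leftarrow>S. a t)" for a :: "_ \<Rightarrow> real"
    by (induction S) (auto simp: algebra_simps)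
  show ?thesis unfolding ES_def lossJ_def A B
    by (simp add: add_divide_distrib diff_divide_distrib)
qed

lemma ED_lin:
  assumes "integrable D (lossP lp hp g u v)" "integrable D (lossU lu hu g u w)"
  shows "ED D (lossJ lp lu hp hu g \<rho> u v w) = ED D (\<lambda>t. - lossP lp hp g u v t) + \<rho> * ED D (lossU lu hu g u w)"
  unfolding ED_def lossJ_def using assms by simp

theorem theorem1:
  fixes X :: "'x::euclidean_space set"
    and U :: "'u::euclidean_space set" and V :: "'v::euclidean_space set"
    and W :: "'w::euclidean_space set"
    and g :: "'x \<Rightarrow> 'u \<Rightarrow> 'f::euclidean_space"
    and hp :: "'f \<Rightarrow> 'v \<Rightarrow> 'p::topological_space"
    and hu :: "'f \<Rightarrow> 'w \<Rightarrow> 'q::topological_space"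
    and lp :: "'p \<Rightarrow> 'y::topological_space \<Rightarrow> real"
    and lu :: "'q \<Rightarrow> 'z::topological_space \<Rightarrow> real"
    and D :: "('x \<times> 'y \<times> 'z) measure"
    and S :: "('x \<times> 'y \<times> 'z) list"
    and \<rho> :: real
    and us vs ws uh vh wh
  assumes "compact U" "convex U" "compact V" "convex V" "compact W" "convex W"
    and "continuous_on (X \<times> U) (\<lambda>(x, u). g x u)"
    and "continuous_on (UNIV \<times> V) (\<lambda>(f, v). hp f v)"
    and "continuous_on (UNIV \<times> W) (\<lambda>(f, w). hu f w)"
    and "continuous_on UNIV (\<lambda>(p, y). lp p y)"
    and "continuous_on UNIV (\<lambda>(q, z). lu q z)"
    and "prob_space D"
    and "space D \<subseteq> X \<times> UNIV"
    and "\<And>u v. u \<in> U \<Longrightarrow> v \<in> V \<Longrightarrow> integrable D (lossP lp hp g u v)"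
    and "\<And>u w. u \<in> U \<Longrightarrow> w \<in> W \<Longrightarrow> integrable D (lossU lu hu g u w)"
    and "S \<noteq> []" and "set S \<subseteq> X \<times> UNIV"
    and "\<rho> > 0"
    and "is_solution (ED D) lp lu hp hu g \<rho> U V W us vs ws"
    and "is_solution (ES S) lp lu hp hu g \<rho> U V W uh vh wh"
  shows "ereal \<bar>ED D (lossJ lp lu hp hu g \<rho> uh vh wh) - ED D (lossJ lp lu hp hu g \<rho> us vs ws)\<bar>
         \<le> 2 * (SUP p \<in> U \<times> V \<times> W. ereal \<bar>ED D (lossJ lp lu hp hu g \<rho> (fst p) (fst (snd p)) (snd (snd p)))
                                    - ES S (lossJ lp lu hp hu g \<rho> (fst p) (fst (snd p)) (snd (snd p)))\<bar>)"
proof -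
  let ?JD = "\<lambda>u v w. ED D (lossJ lp lu hp hu g \<rho> u v w)"
  let ?JS = "\<lambda>u v w. ES S (lossJ lp lu hp hu g \<rho> u v w)"
  let ?PD = "\<lambda>u v. ED D (\<lambda>t. - lossP lp hp g u v t)"
  let ?PS = "\<lambda>u v. ES S (\<lambda>t. - lossP lp hp g u v t)"
  let ?LD = "\<lambda>u w. ED D (lossU lu hu g u w)"
  let ?LS = "\<lambda>u w. ES S (lossU lu hu g u w)"
  define M where "M = (SUP p \<in> U \<times> V \<times> W. ereal \<bar>?JD (fst p) (fst (snd p)) (snd (snd p)) - ?JS (fst p) (fst (snd p)) (snd (snd p))\<bar>)"
  have le: "ereal \<bar>?JD u v w - ?JS u v w\<bar> \<le> M" if "u \<in> U" "v \<in> V" "w \<in> W" for u v w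
    unfolding M_def by (rule SUP_upper2[of "(u,v,w)"]) (use that in auto)
  obtain vD wD where us: "us \<in> U"
    and vD: "\<forall>u'\<in>U. vD u' \<in> V \<and> (\<forall>v'\<in>V. ?PD u' v' \<le> ?PD u' (vD u'))"
    and wD: "\<forall>u'\<in>U. wD u' \<in> W \<and> (\<forall>w'\<in>W. ?LD u' (wD u') \<le> ?LD u' w')"
    and vs: "vs = vD us" and ws: "ws = wD us"
    and minD: "\<forall>u'\<in>U. ?JD us vs ws \<le> ?JD u' (vD u') (wD u')"
    using assms(19) unfolding is_solution_def by blast
  obtain vS wS where uh: "uh \<in> U"
    and vS: "\<forall>u'\<in>U. vS u' \<in> V \<and> (\<forall>v'\<in>V. ?PS u' v' \<le> ?PS u' (vS u'))"
    and wS: "\<forall>u'\<in>U. wS u' \<in> W \<and> (\<forall>w'\<in>W. ?LS u' (wS u') \<le> ?LS u' w')"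
    and vh: "vh = vS uh" and wh: "wh = wS uh"
    and minS: "\<forall>u'\<in>U. ?JS uh vh wh \<le> ?JS u' (vS u') (wS u')"
    using assms(20) unfolding is_solution_def by blast
  have Mge: "ereal \<bar>?JD uh vh wh - ?JS uh vh wh\<bar> \<le> M"
    using le uh vS wS vh wh by auto
  show ?thesis
  proof (cases M)
    case (real m)
    have lem: "\<bar>?JD u v w - ?JS u v w\<bar> \<le> m" if "u \<in> U" "v \<in> V" "w \<in> W" for u v w
      using le[OF that] real by simp
    have JDl: "?JD u v w = ?PD u v + \<rho> * ?LD u w" if "u \<in> U" "v \<in> V" "w \<in> W" for u v w
      by (rule ED_lin) (use assms(14,15) that in auto)
    have JSl: "?JS u v w = ?PS u v + \<rho> * ?LS u w" for u v w by (rule ES_lin)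
    have vsV: "vs \<in> V" "wS us \<in> W" "vS us \<in> V" "ws \<in> W" "vh \<in> V" "wh \<in> W" "vD uh \<in> V" "wD uh \<in> W"
      using vD wD vS wS us uh vs ws vh wh by auto
    have u1: "?JD uh vh wh \<le> ?JS uh vh wh + m" using lem[OF uh vsV(5,6)] by simp
    have u2: "?JS uh vh wh \<le> ?JS us (vS us) (wS us)" using minS us by auto
    have u3: "?JS us (vS us) (wS us) \<le> ?JS us (vS us) ws"
      using JSl wS us vsV assms(18) by (simp add: mult_left_mono)
    have u4: "?JS us (vS us) ws \<le> ?JD us (vS us) ws + m" using lem[OF us vsV(3,4)] by simp
    have u5: "?JD us (vS us) ws \<le> ?JD us vs ws"
      using JDl[OF us vsV(3,4)] JDl[OF us vsV(1,4)] vD us vsV vs by auto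
    have l1: "?JS uh vh wh - m \<le> ?JD uh vh wh" using lem[OF uh vsV(5,6)] by simp
    have l2: "?JS uh (vD uh) wh \<le> ?JS uh vh wh"
      using JSl vS uh vsV vh by simp
    have l3: "?JD uh (vD uh) wh - m \<le> ?JS uh (vD uh) wh" using lem[OF uh vsV(7,6)] by simp
    have l4: "?JD uh (vD uh) (wD uh) \<le> ?JD uh (vD uh) wh"
      using JDl[OF uh vsV(7,6)] JDl[OF uh vsV(7,8)] wD uh vsV assms(18) by (simp add: mult_left_mono)
    have l5: "?JD us vs ws \<le> ?JD uh (vD uh) (wD uh)" using minD uh by auto
    have "\<bar>?JD uh vh wh - ?JD us vs ws\<bar> \<le> 2 * m"
      using u1 u2 u3 u4 u5 l1 l2 l3 l4 l5 by linarith
    then show ?thesis unfolding M_def[symmetric] using real by simp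
  next
    case PInf
    then show ?thesis unfolding M_def[symmetric] by simp
  next
    case MInf
    then show ?thesis using Mge by simp
  qed
qed

end
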